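(* Let $d\ge 2$. There are a constant $C>0$ and $n_0(d)$ depending only on $d$ such that for all $n\ge n_0(d)$: if $\mathcal{F}$, $B_i$ are as in the context, $J\subseteq[n]$ with $|J|\le n/4$, and $K\ge 0$ is a real number with $|E(\mathcal{G}_J)|\ge\binom{n-|J|}{d}-Kn$, then $|\mathcal{T}_J^1|\le CK$.
   Context: Let $\mathcal{F}=\{F_1,\dots,F_m\}\subseteq\binom{[n]}{d+1}$ consist of distinct sets and have VC-dimension at most $d$ (no $(d+1)$-set $S$ is shattered, i.e. no $S$ such that every $A\subseteq S$ equals $F\cap S$ for some $F\in\mathcal{F}$). For $i\in[m]$, call $B\subsetneq F_i$ admissible for $F_i$ if $F\cap F_i\neq B$ for every $F\in\mathcal{F}$. For each $i$, $B_i$ is a fixed admissible set for $F_i$ of maximum cardinality among all admissible sets. For $J\subseteq[n]$, $\mathcal{G}_J$ is the $d$-uniform hypergraph on vertex set $[n]\setminus J$ with edge set $E(\mathcal{G}_J):=\{F_k\setminus J: k\in[m],\ |F_k\cap J|=1\}$. $\mathcal{T}_J^1$ is the set of $F_k\in\mathcal{F}$ with $F_k\subseteq[n]\setminus J$, $B_k\subseteq[n]\setminus J$ and $|B_k|=d-1$. *)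

theory Defs
  imports Complex_Main
begin

text \<open>The family is indexed as F 0, ..., F (m-1); the ground set [n] is {1..n}.\<close>

definition shattered :: "nat set set \<Rightarrow> nat set \<Rightarrow> bool" where
  "shattered \<F> S \<longleftrightarrow> (\<forall>A. A \<subseteq> S \<longrightarrow> (\<exists>F\<in>\<F>. F \<inter> S = A))"

definition vc_dim_le :: "nat set set \<Rightarrow> nat \<Rightarrow> nat \<Rightarrow> bool" where
  "vc_dim_le \<F> n d \<longleftrightarrow>
     (\<forall>S. S \<subseteq> {1..n} \<longrightarrow> card S = d + 1 \<longrightarrow> \<not> shattered \<F> S)"

definition admissible :: "(nat \<Rightarrow> nat set) \<Rightarrow> nat \<Rightarrow> nat \<Rightarrow> nat set \<Rightarrow> bool" where
  "admissible F m i B \<longleftrightarrow> B \<subset> F i \<and> (\<forall>k<m. F k \<inter> F i \<noteq> B)"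

definition max_admissible :: "(nat \<Rightarrow> nat set) \<Rightarrow> nat \<Rightarrow> nat \<Rightarrow> nat set \<Rightarrow> bool" where
  "max_admissible F m i B \<longleftrightarrow> admissible F m i B \<and>
     (\<forall>B'. admissible F m i B' \<longrightarrow> card B' \<le> card B)"

definition edges_G :: "(nat \<Rightarrow> nat set) \<Rightarrow> nat \<Rightarrow> nat set \<Rightarrow> nat set set" where
  "edges_G F m J = {F k - J | k. k < m \<and> card (F k \<inter> J) = 1}"

definition T1 :: "(nat \<Rightarrow> nat set) \<Rightarrow> (nat \<Rightarrow> nat set) \<Rightarrow> nat \<Rightarrow> nat \<Rightarrow> nat \<Rightarrow> nat set \<Rightarrow> nat set set" where
  "T1 F B m n d J = {F k | k. k < m \<and> F k \<subseteq> {1..n} - J \<and> B k \<subseteq> {1..n} - J \<and> card (B k) = d - 1}"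

end

theory Submission
  imports Defs
begin

lemma two_elems:
  assumes "finite X" "card X = 2"
  obtains a b where "a \<noteq> b" "X = {a, b}"
  using assms by (metis card_2_iff)

lemma one_elem:
  assumes "finite X" "card X = 1"
  obtains w where "X = {w}"
  using assms by (metis card_1_singletonE)

lemma trace_exists:
  assumes Fp: "\<forall>i<m. F i \<subseteq> {1..n} \<and> card (F i) = d + 1"
    and adm: "\<forall>i<m. max_admissible F m i (B i)"
    and k: "k < m" "card (B k) = d - 1" "d \<ge> 2"
    and a: "a \<in> F k" "a \<notin> B k"
  shows "\<exists>w. w \<notin> F k \<and> w \<notin> B k \<and> (\<exists>j<m. F j = B k \<union> {a, w})"
proof -
  have mk: "max_admissible F m k (B k)" using adm k by auto
  have Bs: "B k \<subset> F k" using mk unfolding max_admissible_def admissible_def by auto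
  have finF: "finite (F k)" using Fp k by (meson finite_atLeastAtMost finite_subset)
  have finB: "finite (B k)" using Bs finF finite_subset by blast
  have cBa: "card (B k \<union> {a}) = d" using finB a k by simp
  have sub: "B k \<union> {a} \<subset> F k"
  proof -
    have "B k \<union> {a} \<subseteq> F k" using Bs a by auto
    moreover have "card (F k) = d + 1" using Fp k by auto
    ultimately show ?thesis using cBa by auto
  qed
  have "\<not> admissible F m k (B k \<union> {a})"
    using mk cBa k unfolding max_admissible_def by fastforce
  then obtain j where j: "j < m" "F j \<inter> F k = B k \<union> {a}"
    using sub unfolding admissible_def by auto
  have finFj: "finite (F j)" using Fp j by (meson finite_atLeastAtMost finite_subset)
  have cFj: "card (F j) = d + 1" using Fp j by auto
  have sj: "B k \<union> {a} \<subseteq> F j" using j by auto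
  have "card (F j - (B k \<union> {a})) = 1"
    using finFj cFj cBa sj card_Diff_subset[OF finite_subset[OF sj finFj] sj] by simp
  then obtain w where w: "F j - (B k \<union> {a}) = {w}" using one_elem finFj by blast
  have Fj: "F j = B k \<union> {a, w}" using w j by auto
  have "w \<notin> F k" using w j by auto
  moreover have "w \<notin> B k" using w by auto
  ultimately show ?thesis using Fj j by blast
qed

lemma perB:
  assumes Fp: "\<forall>i<m. F i \<subseteq> {1..n} \<and> card (F i) = d + 1"
    and adm: "\<forall>i<m. max_admissible F m i (B i)"
    and k: "k < m" "card (B k) = d - 1" "d \<ge> 2"
  shows "card (F ` {l. l < m \<and> B l = B k}) \<le> 3"
proof -
  have mk: "max_admissible F m k (B k)" using adm k by auto
  have Bs: "B k \<subset> F k" using mk unfolding max_admissible_def admissible_def by auto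
  have finF: "finite (F k)" using Fp k by (meson finite_atLeastAtMost finite_subset)
  have finB: "finite (B k)" using Bs finF finite_subset by blast
  have "card (F k - B k) = 2" using Fp k Bs finB card_Diff_subset[OF finB] by auto
  then obtain a b where ab: "a \<noteq> b" "F k - B k = {a, b}"
    using two_elems finF by blast
  have Fk: "F k = B k \<union> {a,b}" "a \<notin> B k" "b \<notin> B k" using ab Bs by auto
  obtain w j where w: "w \<notin> F k" "w \<notin> B k" "j < m" "F j = B k \<union> {a, w}"
    using trace_exists[OF Fp adm k, of a] Fk by auto
  obtain w' j' where w': "w' \<notin> F k" "w' \<notin> B k" "j' < m" "F j' = B k \<union> {b, w'}"
    using trace_exists[OF Fp adm k, of b] Fk by auto
  have "F ` {l. l < m \<and> B l = B k} \<subseteq> {B k \<union> {a,b}, B k \<union> {a,w'}, B k \<union> {b,w}}"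
  proof
    fix X assume "X \<in> F ` {l. l < m \<and> B l = B k}"
    then obtain l where l: "l < m" "B l = B k" "X = F l" by auto
    have ml: "max_admissible F m l (B l)" using adm l by auto
    have Bsl: "B k \<subset> F l" using ml l unfolding max_admissible_def admissible_def by auto
    have nB: "\<forall>i<m. F i \<inter> F l \<noteq> B k" using ml l unfolding max_admissible_def admissible_def by auto
    have finFl: "finite (F l)" using Fp l by (meson finite_atLeastAtMost finite_subset)
    have "card (F l - B k) = 2" using Fp l Bsl finB card_Diff_subset[OF finB] k by auto
    then obtain p q where pq: "p \<noteq> q" "F l - B k = {p, q}"
      using two_elems finFl by blast
    have Fl: "F l = B k \<union> {p,q}" "p \<notin> B k" "q \<notin> B k" using pq Bsl by auto
    have key: "\<And>Q. Q \<inter> B k = {} \<Longrightarrow> F l \<inter> (B k \<union> Q) \<noteq> B k \<Longrightarrow> {p,q} \<inter> Q \<noteq> {}"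
      using Fl by blast
    have i1: "{p,q} \<inter> {a,b} \<noteq> {}" using key[of "{a,b}"] nB k Fk by (auto simp: Int_commute)
    have i2: "{p,q} \<inter> {a,w} \<noteq> {}" using key[of "{a,w}"] nB w Fk by (metis Int_commute Int_insert_left_if0 Int_insert_left_if1 inf_bot_left insert_not_empty)
    have i3: "{p,q} \<inter> {b,w'} \<noteq> {}" using key[of "{b,w'}"] nB w' Fk by (metis Int_commute Int_insert_left_if0 Int_insert_left_if1 inf_bot_left insert_not_empty)
    have ne: "a \<noteq> w'" "b \<noteq> w" using w w' Fk by auto
    have "{p,q} = {a,b} \<or> {p,q} = {a,w'} \<or> {p,q} = {b,w}"
      using i1 i2 i3 ne ab(1) pq(1) by auto
    then show "X \<in> {B k \<union> {a,b}, B k \<union> {a,w'}, B k \<union> {b,w}}" using Fl l by auto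
  qed
  moreover have "card {B k \<union> {a,b}, B k \<union> {a,w'}, B k \<union> {b,w}} \<le> 3"
    by (simp add: card_insert_if)
  ultimately show ?thesis
    by (meson card_mono finite.emptyI finite.insertI le_trans)
qed

lemma nonedge:
  assumes adm: "\<forall>i<m. max_admissible F m i (B i)"
    and k: "k < m" "F k \<inter> J = {}"
    and z: "z \<notin> J" "z \<notin> F k"
  shows "B k \<union> {z} \<notin> edges_G F m J"
proof
  assume "B k \<union> {z} \<in> edges_G F m J"
  then obtain l where l: "l < m" "F l - J = B k \<union> {z}" unfolding edges_G_def by auto
  have mk: "max_admissible F m k (B k)" using adm k by auto
  have Bs: "B k \<subset> F k" using mk unfolding max_admissible_def admissible_def by auto
  have "F l \<inter> F k = (F l - J) \<inter> F k" using k by blast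
  also have "\<dots> = B k" using l Bs z by auto
  finally show False using mk l unfolding max_admissible_def admissible_def by auto
qed

lemma card_subsets_e:
  assumes "finite e" "card e = d" "d \<ge> 1"
  shows "card {b. b \<subseteq> e \<and> card b = d - 1} = d"
  using n_subsets[OF assms(1), of "d-1"] assms binomial_symmetric[of "d-1" d] by simp

lemma main:
  assumes d2: "d \<ge> 2" and nlarge: "n \<ge> 4*d+4"
  and Fp: "\<forall>i<m. F i \<subseteq> {1..n} \<and> card (F i) = d+1"
  and adm: "\<forall>i<m. max_admissible F m i (B i)"
  and J: "J \<subseteq> {1..n}" "real (card J) \<le> real n / 4"
  and K: "K \<ge> 0"
  and E: "real (card (edges_G F m J)) \<ge> real ((n - card J) choose d) - K * real n"
  shows "real (card (T1 F B m n d J)) \<le> 6 * real d * K"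
proof -
  define V where "V = {1..n} - J"
  have finV: "finite V" unfolding V_def by auto
  have cV: "card V = n - card J" unfolding V_def using J card_Diff_subset[of J "{1..n}"]
    by (simp add: finite_subset)
  define I where "I = {k. k<m \<and> F k \<subseteq> V \<and> card (B k) = d-1}"
  have finI: "finite I" unfolding I_def by auto
  have Bsub: "\<And>k. k < m \<Longrightarrow> B k \<subset> F k"
    using adm unfolding max_admissible_def admissible_def by auto
  have T1eq: "T1 F B m n d J = F ` I"
  proof (rule set_eqI, rule iffI)
    fix X assume "X \<in> T1 F B m n d J" thus "X \<in> F ` I" unfolding T1_def I_def V_def by auto
  next
    fix X assume "X \<in> F ` I"
    then obtain k where "k \<in> I" "X = F k" by auto
    thus "X \<in> T1 F B m n d J" using Bsub[of k] unfolding T1_def I_def V_def by auto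
  qed
  define BB where "BB = B ` I"
  have finBB: "finite BB" unfolding BB_def using finI by auto
  have "F ` I = (\<Union>b\<in>BB. F ` {k\<in>I. B k = b})" unfolding BB_def by auto
  hence "card (F ` I) \<le> (\<Sum>b\<in>BB. card (F ` {k\<in>I. B k = b}))"
    using card_UN_le[OF finBB] by simp
  also have "\<dots> \<le> (\<Sum>b\<in>BB. 3)"
  proof (rule sum_mono)
    fix b assume "b \<in> BB"
    then obtain k where kI: "k \<in> I" "b = B k" unfolding BB_def by auto
    have "card (F ` {l. l < m \<and> B l = B k}) \<le> 3"
      using perB[OF Fp adm _ _ d2, of k] kI unfolding I_def by auto
    moreover have "F ` {k\<in>I. B k = b} \<subseteq> F ` {l. l < m \<and> B l = B k}" using kI unfolding I_def by auto
    ultimately show "card (F ` {k\<in>I. B k = b}) \<le> 3"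
    proof -
      have "finite {l. l < m \<and> B l = B k}" by (rule finite_subset[of _ "{..<m}"]) auto
      hence "card (F ` {k\<in>I. B k = b}) \<le> card (F ` {l. l < m \<and> B l = B k})"
        using card_mono \<open>F ` {k\<in>I. B k = b} \<subseteq> _\<close> by blast
      thus ?thesis using \<open>card (F ` {l. l < m \<and> B l = B k}) \<le> 3\<close> by linarith
    qed
  qed
  finally have T1bound: "card (T1 F B m n d J) \<le> 3 * card BB" using T1eq by simp
  define S where "S = {e. e \<subseteq> V \<and> card e = d}"
  define N where "N = S - edges_G F m J"
  have finS: "finite S" unfolding S_def using finV by auto
  have cS: "card S = (n - card J) choose d" unfolding S_def using n_subsets[OF finV] cV by simp
  have ES: "edges_G F m J \<subseteq> S"
  proof
    fix e assume "e \<in> edges_G F m J"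
    then obtain k where k: "k < m" "card (F k \<inter> J) = 1" "e = F k - J" unfolding edges_G_def by auto
    have finF: "finite (F k)" using Fp k by (meson finite_atLeastAtMost finite_subset)
    have "card e = d" using k Fp card_Diff_subset_Int[of "F k" J] finF by auto
    moreover have "e \<subseteq> V" using k Fp unfolding V_def by auto
    ultimately show "e \<in> S" unfolding S_def by auto
  qed
  have cN: "card N = card S - card (edges_G F m J)"
    unfolding N_def using card_Diff_subset[OF finite_subset[OF ES finS] ES] .
  have cNr: "real (card N) \<le> K * real n"
    using cN cS E card_mono[OF finS ES] by (simp add: of_nat_diff)
  have finN: "finite N" unfolding N_def using finS by auto
  define L where "L = n - card J - (d+1)"
  have lower: "\<And>b. b \<in> BB \<Longrightarrow> L \<le> card {e\<in>N. b \<subseteq> e}"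
  proof -
    fix b assume "b \<in> BB"
    then obtain k where kI: "k < m" "F k \<subseteq> V" "card (B k) = d-1" "b = B k" unfolding BB_def I_def by auto
    have finF: "finite (F k)" using Fp kI by (meson finite_atLeastAtMost finite_subset)
    have bs: "b \<subset> F k" using Bsub kI by auto
    have finb: "finite b" using bs finF finite_subset by blast
    have inj: "inj_on (\<lambda>z. b \<union> {z}) (V - F k)"
    proof (rule inj_onI)
      fix x y assume "x \<in> V - F k" "y \<in> V - F k" "b \<union> {x} = b \<union> {y}"
      then show "x = y" using bs by blast
    qed
    have img: "(\<lambda>z. b \<union> {z}) ` (V - F k) \<subseteq> {e\<in>N. b \<subseteq> e}"
    proof
      fix e assume "e \<in> (\<lambda>z. b \<union> {z}) ` (V - F k)"
      then obtain z where z: "z \<in> V" "z \<notin> F k" "e = b \<union> {z}" by auto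
      have zb: "z \<notin> b" using z bs by auto
      have "card e = d" using z zb finb kI d2 by simp
      moreover have "e \<subseteq> V" using z bs kI by auto
      moreover have "e \<notin> edges_G F m J"
        using nonedge[OF adm kI(1), of J z] z kI unfolding V_def by auto
      ultimately show "e \<in> {e\<in>N. b \<subseteq> e}" unfolding N_def S_def using z by auto
    qed
    have "L \<le> card V - card (F k)" unfolding L_def using cV Fp kI by simp
    also have "\<dots> \<le> card (V - F k)" using diff_card_le_card_Diff[OF finF] .
    also have "\<dots> = card ((\<lambda>z. b \<union> {z}) ` (V - F k))" using card_image[OF inj] by simp
    also have "\<dots> \<le> card {e\<in>N. b \<subseteq> e}" using card_mono[OF _ img] finN by simp
    finally show "L \<le> card {e\<in>N. b \<subseteq> e}" .
  qed
  have upper: "\<And>e. e \<in> N \<Longrightarrow> card {b\<in>BB. b \<subseteq> e} \<le> d"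
  proof -
    fix e assume "e \<in> N"
    hence e: "e \<subseteq> V" "card e = d" unfolding N_def S_def by auto
    have fe: "finite e" using e finV finite_subset by blast
    have "{b\<in>BB. b \<subseteq> e} \<subseteq> {b. b \<subseteq> e \<and> card b = d - 1}" unfolding BB_def I_def by auto
    moreover have "finite {b. b \<subseteq> e \<and> card b = d - 1}" using fe by auto
    ultimately show "card {b\<in>BB. b \<subseteq> e} \<le> d"
      using card_subsets_e[OF fe e(2)] d2 card_mono[of "{b. b \<subseteq> e \<and> card b = d - 1}" "{b\<in>BB. b \<subseteq> e}"] by simp
  qed
  have "card BB * L = (\<Sum>b\<in>BB. L)" by simp
  also have "\<dots> \<le> (\<Sum>b\<in>BB. card {e\<in>N. b \<subseteq> e})" using lower by (rule sum_mono)
  also have "\<dots> = (\<Sum>b\<in>BB. \<Sum>e\<in>N. if b \<subseteq> e then 1 else 0)"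
    using finN by (simp add: sum.inter_filter[symmetric])
  also have "\<dots> = (\<Sum>e\<in>N. \<Sum>b\<in>BB. if b \<subseteq> e then 1 else 0)" by (rule sum.swap)
  also have "\<dots> = (\<Sum>e\<in>N. card {b\<in>BB. b \<subseteq> e})"
    using finBB by (simp add: sum.inter_filter[symmetric])
  also have "\<dots> \<le> (\<Sum>e\<in>N. d)" using upper by (rule sum_mono)
  also have "\<dots> = d * card N" by simp
  finally have dc: "card BB * L \<le> d * card N" .
  have Lr: "real L \<ge> real n / 2"
  proof -
    have "real (card J) + real d + 1 \<le> real n" using J(2) nlarge by linarith
    hence "real L = real n - real (card J) - real d - 1" unfolding L_def by (simp add: of_nat_diff)
    thus ?thesis using J(2) nlarge by linarith
  qed
  have "real (card BB) * (real n / 2) \<le> real (card BB) * real L"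
    using Lr by (intro mult_left_mono) auto
  also have "\<dots> \<le> real d * real (card N)" using dc by (metis of_nat_le_iff of_nat_mult)
  also have "\<dots> \<le> real d * (K * real n)" using cNr by (simp add: mult_left_mono)
  finally have "real (card BB) * (real n / 2) \<le> real d * (K * real n)" .
  moreover have "real n > 0" using nlarge by simp
  ultimately have "real (card BB) \<le> 2 * real d * K"
    by (simp add: field_simps) 
  moreover have "real (card (T1 F B m n d J)) \<le> 3 * real (card BB)"
    using T1bound by (metis of_nat_le_iff of_nat_mult of_nat_numeral)
  ultimately show ?thesis by linarith
qed

theorem claim3p8:
  fixes d :: nat
  assumes "d \<ge> 2"
  shows "\<exists>C::real. C > 0 \<and> (\<exists>n0::nat. \<forall>n\<ge>n0. \<forall>(F::nat \<Rightarrow> nat set) (B::nat \<Rightarrow> nat set) (m::nat) (J::nat set) (K::real).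
     (\<forall>i<m. F i \<subseteq> {1..n} \<and> card (F i) = d + 1) \<longrightarrow>
     inj_on F {..<m} \<longrightarrow>
     vc_dim_le (F ` {..<m}) n d \<longrightarrow>
     (\<forall>i<m. max_admissible F m i (B i)) \<longrightarrow>
     J \<subseteq> {1..n} \<longrightarrow> real (card J) \<le> real n / 4 \<longrightarrow>
     K \<ge> 0 \<longrightarrow>
     real (card (edges_G F m J)) \<ge> real ((n - card J) choose d) - K * real n \<longrightarrow>
     real (card (T1 F B m n d J)) \<le> C * K)"
proof (rule exI[of _ "6 * real d"], rule conjI)
  show "6 * real d > 0" using assms by simp
next
  show "\<exists>n0::nat. \<forall>n\<ge>n0. \<forall>(F::nat \<Rightarrow> nat set) (B::nat \<Rightarrow> nat set) (m::nat) (J::nat set) (K::real).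
     (\<forall>i<m. F i \<subseteq> {1..n} \<and> card (F i) = d + 1) \<longrightarrow>
     inj_on F {..<m} \<longrightarrow>
     vc_dim_le (F ` {..<m}) n d \<longrightarrow>
     (\<forall>i<m. max_admissible F m i (B i)) \<longrightarrow>
     J \<subseteq> {1..n} \<longrightarrow> real (card J) \<le> real n / 4 \<longrightarrow>
     K \<ge> 0 \<longrightarrow>
     real (card (edges_G F m J)) \<ge> real ((n - card J) choose d) - K * real n \<longrightarrow>
     real (card (T1 F B m n d J)) \<le> 6 * real d * K"
  proof (rule exI[of _ "4*d+4"], intro allI impI)
  fix n F B m J K
  assume "n \<ge> 4*d+4" "\<forall>i<m. F i \<subseteq> {1..n} \<and> card (F i) = d + 1"
    "\<forall>i<m. max_admissible F m i (B i)" "J \<subseteq> {1..n}" "real (card J) \<le> real n / 4"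
    "K \<ge> 0" "real (card (edges_G F m J)) \<ge> real ((n - card J) choose d) - K * real n"
  then show "real (card (T1 F B m n d J)) \<le> 6 * real d * K"
    using main[OF assms] by blast
  qed
qed

end
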